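(* Let $t\ge 2$ be an integer and let $G$ be a graph with $n$ vertices. Then \[ \mu_{t}(G)\leq \frac{t}{n}\binom{n}{t}^{\frac{1}{t}}\left(c_{t}(G)\right)^{\frac{t-1}{t}}, \] where $c_t(G)$ is the number of $t$-cliques of $G$ and $\mu_t(G)$ is the $t$-clique spectral radius of $G$. Furthermore, equality holds if $G$ is a complete graph or a $K_t$-free graph.
   Context: All graphs are simple and undirected. A $t$-clique of a graph $G$ is a set of $t$ vertices inducing a complete subgraph; $C_t(G)$ denotes the set of $t$-cliques and $c_t(G)=|C_t(G)|$. For a graph $G$ with vertex set $\{1,\dots,n\}$, the $t$-clique tensor $\mathcal{A}(G)=(a_{i_1\cdots i_t})$ is the order $t$, dimension $n$ tensor with $a_{i_1 i_2\cdots i_t}=\frac{1}{(t-1)!}$ if $\{i_1,\dots,i_t\}\in C_t(G)$ (in particular the $i_j$ are distinct) and $a_{i_1\cdots i_t}=0$ otherwise. For an order $m$ dimension $n$ tensor $\mathcal{A}$ and $x\in\mathbb{C}^n$, $\mathcal{A}x^{m-1}$ is the vector whose $i$-th component is $\sum_{i_2,\dots,i_m=1}^n a_{i i_2\cdots i_m}x_{i_2}\cdots x_{i_m}$; $\lambda\in\mathbb{C}$ is an eigenvalue of $\mathcal{A}$ if there is a nonzero $x\in\mathbb{C}^n$ with $\mathcal{A}x^{m-1}=\lambda x^{[m-1]}$, where $x^{[m-1]}=(x_1^{m-1},\dots,x_n^{m-1})^T$. The $t$-clique spectral radius $\mu_t(G)$ is the largest modulus of an eigenvalue of the $t$-clique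 tensor of $G$. *)

theory Defs
  imports Complex_Main
begin

text \<open>Graphs: vertex set {0..<n} (the paper's {1..n} shifted), edge relation E
 (assumed symmetric and irreflexive in the theorem).\<close>

definition is_clique :: "(nat \<Rightarrow> nat \<Rightarrow> bool) \<Rightarrow> nat set \<Rightarrow> bool" where
  "is_clique E S \<longleftrightarrow> (\<forall>u\<in>S. \<forall>v\<in>S. u \<noteq> v \<longrightarrow> E u v)"

definition cliques :: "nat \<Rightarrow> (nat \<Rightarrow> nat \<Rightarrow> bool) \<Rightarrow> nat \<Rightarrow> nat set set" where
  "cliques n E t = {S. S \<subseteq> {..<n} \<and> card S = t \<and> is_clique E S}"

definition clique_count :: "nat \<Rightarrow> (nat \<Rightarrow> nat \<Rightarrow> bool) \<Rightarrow> nat \<Rightarrow> nat" where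
  "clique_count n E t = card (cliques n E t)"

text \<open>Tensors of order m, dimension n: functions from index lists (of length m,
 entries < n) to complex numbers.\<close>

definition clique_tensor :: "nat \<Rightarrow> (nat \<Rightarrow> nat \<Rightarrow> bool) \<Rightarrow> nat \<Rightarrow> nat list \<Rightarrow> complex" where
  "clique_tensor n E t is =
     (if length is = t \<and> distinct is \<and> set is \<in> cliques n E t
      then 1 / of_nat (fact (t - 1)) else 0)"

definition tensor_apply :: "nat \<Rightarrow> nat \<Rightarrow> (nat list \<Rightarrow> complex) \<Rightarrow> (nat \<Rightarrow> complex) \<Rightarrow> nat \<Rightarrow> complex" where
  "tensor_apply m n A x i =
     (\<Sum>is \<in> {is. length is = m - 1 \<and> set is \<subseteq> {..<n}}. A (i # is) * prod_list (map x is))"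

definition tensor_eigenvalue :: "nat \<Rightarrow> nat \<Rightarrow> (nat list \<Rightarrow> complex) \<Rightarrow> complex \<Rightarrow> bool" where
  "tensor_eigenvalue m n A lam \<longleftrightarrow>
     (\<exists>x :: nat \<Rightarrow> complex. (\<exists>i<n. x i \<noteq> 0) \<and>
        (\<forall>i<n. tensor_apply m n A x i = lam * x i ^ (m - 1)))"

definition tensor_spectral_radius :: "nat \<Rightarrow> nat \<Rightarrow> (nat list \<Rightarrow> complex) \<Rightarrow> real" where
  "tensor_spectral_radius m n A = Sup {cmod lam | lam. tensor_eigenvalue m n A lam}"

definition clique_spectral_radius :: "nat \<Rightarrow> (nat \<Rightarrow> nat \<Rightarrow> bool) \<Rightarrow> nat \<Rightarrow> real" where
  "clique_spectral_radius n E t = tensor_spectral_radius t n (clique_tensor n E t)"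

end

theory Submission
  imports Defs "HOL-Analysis.Convex" "Jordan_Normal_Form.Char_Poly" "HOL-Combinatorics.Multiset_Permutations"
begin


lemma tangent_pow:
  fixes x m :: real and k :: nat
  assumes "x \<ge> 0" "m \<ge> 0" "k \<ge> 1"
  shows "m ^ k + real k * m ^ (k - 1) * (x - m) \<le> x ^ k"
proof (cases "m = 0")
  case True
  then show ?thesis using assms by (cases "k = 1") (auto simp: zero_power)
next
  case False
  then have mp: "m > 0" using assms by auto
  have "-1 \<le> (x - m) / m" using mp assms by (simp add: field_simps)
  from Bernoulli_inequality[OF this, of k]
  have "1 + real k * ((x - m) / m) \<le> (1 + (x - m) / m) ^ k" .
  also have "1 + (x - m) / m = x / m" using mp by (simp add: field_simps)
  finally have "m ^ k * (1 + real k * ((x - m) / m)) \<le> m ^ k * (x / m) ^ k"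
    using mp by (intro mult_left_mono) auto
  also have "m ^ k * (x / m) ^ k = x ^ k" using mp by (simp add: power_divide)
  also have "m ^ k * (1 + real k * ((x - m) / m)) = m ^ k + real k * m ^ (k - 1) * (x - m)"
  proof -
    have "m ^ k = m * m ^ (k - 1)" using assms by (cases k) auto
    then show ?thesis using mp by (simp add: field_simps)
  qed
  finally show ?thesis .
qed

lemma power_mean:
  fixes z :: "'a \<Rightarrow> real" and k :: nat
  assumes "finite A" "\<And>a. a \<in> A \<Longrightarrow> z a \<ge> 0" "k \<ge> 1"
  shows "(\<Sum>a\<in>A. z a) ^ k \<le> real (card A) ^ (k - 1) * (\<Sum>a\<in>A. z a ^ k)"
proof (cases "A = {}")
  case True then show ?thesis using assms by (simp add: zero_power)
next
  case False
  define c where "c = real (card A)"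
  have cp: "c > 0" using False assms unfolding c_def by (simp add: card_gt_0_iff)
  have conv: "convex_on {0..} (\<lambda>x::real. x ^ k)"
  proof (cases "even k")
    case True then show ?thesis using convex_power_even convex_on_subset by blast
  next
    case False then show ?thesis using convex_power_odd by blast
  qed
  have "(\<Sum>a\<in>A. (1/c) *\<^sub>R z a) ^ k \<le> (\<Sum>a\<in>A. (1/c) * z a ^ k)"
    using convex_on_sum[OF assms(1) False conv, of "\<lambda>_. 1/c" z] cp assms(2)
    by (simp add: c_def)
  then have "((\<Sum>a\<in>A. z a) / c) ^ k \<le> (\<Sum>a\<in>A. z a ^ k) / c"
    by (simp add: sum_divide_distrib[symmetric] sum_distrib_left[symmetric] divide_inverse mult.commute)
  then have "(\<Sum>a\<in>A. z a) ^ k / c ^ k \<le> (\<Sum>a\<in>A. z a ^ k) / c"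
    by (simp add: power_divide)
  then have "(\<Sum>a\<in>A. z a) ^ k \<le> (\<Sum>a\<in>A. z a ^ k) / c * c ^ k"
    using cp by (simp add: divide_le_eq)
  also have "(\<Sum>a\<in>A. z a ^ k) / c * c ^ k = c ^ (k - 1) * (\<Sum>a\<in>A. z a ^ k)"
  proof -
    have "c ^ k = c * c ^ (k - 1)" using assms by (cases k) auto
    then show ?thesis using cp by simp
  qed
  finally show ?thesis unfolding c_def .
qed



definition esym :: "nat \<Rightarrow> nat \<Rightarrow> (nat \<Rightarrow> real) \<Rightarrow> real" where
  "esym n t w = (\<Sum>S\<in>{S. S \<subseteq> {..<n} \<and> card S = t}. \<Prod>i\<in>S. w i)"

lemma subsets_Suc:
  "{S. S \<subseteq> {..<Suc n} \<and> card S = Suc k} =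
     {S. S \<subseteq> {..<n} \<and> card S = Suc k} \<union> insert n ` {S. S \<subseteq> {..<n} \<and> card S = k}"
proof (intro equalityI subsetI)
  fix S assume S: "S \<in> {S. S \<subseteq> {..<Suc n} \<and> card S = Suc k}"
  show "S \<in> {S. S \<subseteq> {..<n} \<and> card S = Suc k} \<union> insert n ` {S. S \<subseteq> {..<n} \<and> card S = k}"
  proof (cases "n \<in> S")
    case True
    have fin: "finite S" using S finite_subset by blast
    have "S = insert n (S - {n})" using True by auto
    moreover have "S - {n} \<subseteq> {..<n}" using S by auto
    moreover have "card (S - {n}) = k" using S True fin by auto
    ultimately show ?thesis by blast
  next
    case False
    then have "S \<subseteq> {..<n}" using S by (auto simp: less_Suc_eq)
    then show ?thesis using S by auto
  qed
next
  fix S assume "S \<in> {S. S \<subseteq> {..<n} \<and> card S = Suc k} \<union> insert n ` {S. S \<subseteq> {..<n} \<and> card S = k}"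
  then show "S \<in> {S. S \<subseteq> {..<Suc n} \<and> card S = Suc k}"
  proof
    assume "S \<in> {S. S \<subseteq> {..<n} \<and> card S = Suc k}" then show ?thesis by auto
  next
    assume "S \<in> insert n ` {S. S \<subseteq> {..<n} \<and> card S = k}"
    then obtain T where T: "T \<subseteq> {..<n}" "card T = k" "S = insert n T" by auto
    have "finite T" using T(1) finite_subset by blast
    moreover have "n \<notin> T" using T(1) by auto
    ultimately show ?thesis using T by auto
  qed
qed

lemma esym_Suc:
  "esym (Suc n) (Suc k) w = esym n (Suc k) w + w n * esym n k w"
proof -
  let ?A = "{S. S \<subseteq> {..<n} \<and> card S = Suc k}"
  let ?B = "{S. S \<subseteq> {..<n} \<and> card S = k}"
  have finA: "finite ?A" by (rule finite_subset[of _ "Pow {..<n}"]) auto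
  have finB: "finite ?B" by (rule finite_subset[of _ "Pow {..<n}"]) auto
  have disj: "?A \<inter> insert n ` ?B = {}" by auto
  have inj: "inj_on (insert n) ?B"
    by (rule inj_onI) (metis Diff_insert_absorb lessThan_iff less_irrefl subsetD mem_Collect_eq)
  have "esym (Suc n) (Suc k) w = (\<Sum>S\<in>?A. \<Prod>i\<in>S. w i) + (\<Sum>S\<in>insert n ` ?B. \<Prod>i\<in>S. w i)"
    unfolding esym_def subsets_Suc by (rule sum.union_disjoint) (use finA finB disj in auto)
  also have "(\<Sum>S\<in>insert n ` ?B. \<Prod>i\<in>S. w i) = (\<Sum>T\<in>?B. \<Prod>i\<in>insert n T. w i)"
    by (subst sum.reindex[OF inj]) simp
  also have "\<dots> = (\<Sum>T\<in>?B. w n * (\<Prod>i\<in>T. w i))"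
  proof (rule sum.cong)
    fix T assume "T \<in> ?B"
    then have "finite T" "n \<notin> T" using finite_subset by auto
    then show "(\<Prod>i\<in>insert n T. w i) = w n * (\<Prod>i\<in>T. w i)" by simp
  qed simp
  finally show ?thesis unfolding esym_def by (simp add: sum_distrib_left)
qed

lemma esym_0: "esym n 0 w = 1"
proof -
  have "{S. S \<subseteq> {..<n} \<and> card S = 0} = {{}}"
    by (auto dest: finite_subset)
  then show ?thesis unfolding esym_def by simp
qed

lemma esym_zero_Suc: "esym 0 (Suc k) w = 0"
proof -
  have "{S. S \<subseteq> {..<0::nat} \<and> card S = Suc k} = {}" by auto
  then show ?thesis unfolding esym_def by simp
qed

lemma maclaurin:
  assumes "\<And>i. w i \<ge> 0"
  shows "esym n t w \<le> real (n choose t) * ((\<Sum>i<n. w i) / real n) ^ t"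
proof (induction n arbitrary: t)
  case 0
  then show ?case by (cases t) (simp_all add: esym_0 esym_zero_Suc)
next
  case (Suc n)
  show ?case
  proof (cases t)
    case 0 then show ?thesis by (simp add: esym_0)
  next
    case (Suc k)
    define s where "s = (\<Sum>i<n. w i)"
    define m where "m = s / real n"
    define u where "u = w n"
    have s0: "s \<ge> 0" unfolding s_def using assms by (simp add: sum_nonneg)
    have m0: "m \<ge> 0" unfolding m_def using s0 by simp
    have u0: "u \<ge> 0" unfolding u_def using assms by simp
    have sm: "s = real n * m" unfolding m_def
    proof (cases "n = 0")
      case True then show "s = real n * (s / real n)" unfolding s_def by simp
    qed simp
    have "esym (Suc n) (Suc k) w = esym n (Suc k) w + u * esym n k w"
      unfolding u_def by (rule esym_Suc)
    also have "\<dots> \<le> real (n choose Suc k) * m ^ Suc k + u * (real (n choose k) * m ^ k)"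
      using Suc.IH[of "Suc k"] Suc.IH[of k] u0 unfolding m_def s_def
      by (intro add_mono mult_left_mono) auto
    also have "\<dots> = real (Suc n choose Suc k) * (m ^ Suc k + real (Suc k) * m ^ k * ((s + u) / real (Suc n) - m))"
    proof -
      have p: "real (Suc n choose Suc k) = real (n choose k) + real (n choose Suc k)" by simp
      have q: "real (Suc n choose Suc k) * real (Suc k) = real (Suc n) * real (n choose k)"
        using Suc_times_binomial_eq[of n k] by (metis of_nat_mult)
      have r: "(s + u) / real (Suc n) - m = (u - m) / real (Suc n)"
        using sm by (simp add: field_simps)
      have "real (Suc n choose Suc k) * (real (Suc k) * m ^ k * ((s + u) / real (Suc n) - m))
            = (real (Suc n choose Suc k) * real (Suc k)) * m ^ k * ((u - m) / real (Suc n))"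
        unfolding r by (simp only: mult.assoc)
      also have "\<dots> = (real (Suc n) * real (n choose k)) * m ^ k * ((u - m) / real (Suc n))"
        by (simp only: q)
      also have "\<dots> = real (n choose k) * m ^ k * (u - m)"
        by (simp add: field_simps)
      finally show ?thesis unfolding p by (simp add: algebra_simps)
    qed
    also have "\<dots> \<le> real (Suc n choose Suc k) * ((s + u) / real (Suc n)) ^ Suc k"
      using tangent_pow[of "(s + u) / real (Suc n)" m "Suc k"] s0 u0 m0
      by (intro mult_left_mono) auto
    also have "s + u = (\<Sum>i<Suc n. w i)" unfolding s_def u_def by simp
    finally show ?thesis using Suc by simp
  qed
qed



definition lst :: "nat \<Rightarrow> nat \<Rightarrow> nat list set" where
  "lst k n = {is. length is = k \<and> set is \<subseteq> {..<n}}"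

definition ar :: "nat \<Rightarrow> (nat \<Rightarrow> nat \<Rightarrow> bool) \<Rightarrow> nat \<Rightarrow> nat list \<Rightarrow> real" where
  "ar n E t L = (if length L = t \<and> distinct L \<and> set L \<in> cliques n E t then 1 / real (fact (t - 1)) else 0)"

lemma clique_tensor_ar: "clique_tensor n E t L = complex_of_real (ar n E t L)"
  unfolding clique_tensor_def ar_def by simp

lemma ar_nonneg: "ar n E t L \<ge> 0"
  unfolding ar_def by simp

lemma finite_lst: "finite (lst k n)"
  unfolding lst_def using finite_lists_length_eq[of "{..<n}" k] by (simp add: conj_commute)

lemma finite_cliques: "finite (cliques n E t)"
  unfolding cliques_def by (rule finite_subset[of _ "Pow {..<n}"]) auto

lemma lst_Suc: "lst (Suc k) n = (\<lambda>(i, is). i # is) ` ({..<n} \<times> lst k n)"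
  unfolding lst_def by (auto simp: length_Suc_conv image_def)

lemma sum_cons:
  fixes f :: "nat list \<Rightarrow> 'a::comm_monoid_add"
  shows "(\<Sum>i<n. \<Sum>is\<in>lst k n. f (i # is)) = (\<Sum>L\<in>lst (Suc k) n. f L)"
proof -
  have inj: "inj_on (\<lambda>(i, is). i # is) ({..<n} \<times> lst k n)"
    by (rule inj_onI) auto
  have "(\<Sum>L\<in>lst (Suc k) n. f L) = (\<Sum>p\<in>{..<n} \<times> lst k n. f (fst p # snd p))"
    unfolding lst_Suc by (subst sum.reindex[OF inj]) (simp add: case_prod_beta)
  also have "\<dots> = (\<Sum>i<n. \<Sum>is\<in>lst k n. f (i # is))"
    by (simp add: sum.cartesian_product split_def)
  finally show ?thesis by simp
qed

lemma finite_perm_set: "finite {xs. set xs = T \<and> distinct xs}"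
  using finite_permutations_of_set[of T] unfolding permutations_of_set_def .

lemma perm_disj: "S \<noteq> S' \<Longrightarrow> permutations_of_set S \<inter> permutations_of_set S' = {}"
  unfolding permutations_of_set_def by auto

lemma clique_sum:
  fixes y :: "nat \<Rightarrow> real"
  assumes "t \<ge> 1"
  shows "(\<Sum>L\<in>lst t n. ar n E t L * prod_list (map y L))
         = real t * (\<Sum>S\<in>cliques n E t. \<Prod>i\<in>S. y i)"
proof -
  define D where "D = {L. length L = t \<and> distinct L \<and> set L \<in> cliques n E t}"
  have DU: "D = (\<Union>S\<in>cliques n E t. permutations_of_set S)"
  proof (intro equalityI subsetI)
    fix L assume "L \<in> D" then show "L \<in> (\<Union>S\<in>cliques n E t. permutations_of_set S)"
      unfolding D_def permutations_of_set_def by auto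
  next
    fix L assume "L \<in> (\<Union>S\<in>cliques n E t. permutations_of_set S)"
    then obtain S where S: "S \<in> cliques n E t" "set L = S" "distinct L"
      unfolding permutations_of_set_def by auto
    then have "length L = t" using distinct_card[of L] unfolding cliques_def by auto
    then show "L \<in> D" unfolding D_def using S by auto
  qed
  have DL: "D \<subseteq> lst t n" unfolding D_def lst_def cliques_def by auto
  have "(\<Sum>L\<in>lst t n. ar n E t L * prod_list (map y L))
        = (\<Sum>L\<in>D. 1 / real (fact (t - 1)) * (\<Prod>i\<in>set L. y i))"
  proof (rule sum.mono_neutral_cong_right[OF finite_lst DL])
    show "\<forall>L\<in>lst t n - D. ar n E t L * prod_list (map y L) = 0"
      unfolding ar_def D_def by auto
    fix L assume "L \<in> D"
    then show "ar n E t L * prod_list (map y L) = 1 / real (fact (t - 1)) * (\<Prod>i\<in>set L. y i)"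
      unfolding ar_def D_def by (simp add: prod.distinct_set_conv_list)
  qed
  also have "\<dots> = (\<Sum>S\<in>cliques n E t. \<Sum>L\<in>permutations_of_set S. 1 / real (fact (t - 1)) * (\<Prod>i\<in>set L. y i))"
    unfolding DU
  proof (rule sum.UNION_disjoint[OF finite_cliques])
    show "\<forall>S\<in>cliques n E t. finite (permutations_of_set S)" by (simp add: finite_permutations_of_set)
    show "\<forall>S\<in>cliques n E t. \<forall>S'\<in>cliques n E t. S \<noteq> S' \<longrightarrow> permutations_of_set S \<inter> permutations_of_set S' = {}"
      by (intro ballI impI perm_disj)
  qed
  also have "\<dots> = (\<Sum>S\<in>cliques n E t. real t * (\<Prod>i\<in>S. y i))"
  proof (rule sum.cong[OF refl])
    fix S assume S: "S \<in> cliques n E t"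
    then have fin: "finite S" and cS: "card S = t" unfolding cliques_def by (auto dest: finite_subset)
    have "(\<Sum>L\<in>permutations_of_set S. 1 / real (fact (t - 1)) * (\<Prod>i\<in>set L. y i))
          = (\<Sum>L\<in>permutations_of_set S. 1 / real (fact (t - 1)) * (\<Prod>i\<in>S. y i))"
      by (rule sum.cong) (auto simp: permutations_of_set_def)
    also have "\<dots> = real (fact t) / real (fact (t - 1)) * (\<Prod>i\<in>S. y i)"
      using fin cS by simp
    also have "real (fact t) / real (fact (t - 1)) = real t"
    proof -
      have "fact t = t * fact (t - 1)" using assms by (cases t) auto
      then show ?thesis by simp
    qed
    finally show "(\<Sum>L\<in>permutations_of_set S. 1 / real (fact (t - 1)) * (\<Prod>i\<in>set L. y i)) = real t * (\<Prod>i\<in>S. y i)" .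
  qed
  finally show ?thesis by (simp add: sum_distrib_left)
qed

lemma distinct_lists_card:
  assumes "finite A"
  shows "card {xs. length xs = k \<and> distinct xs \<and> set xs \<subseteq> A} = (card A choose k) * fact k"
proof -
  have eq: "{xs. length xs = k \<and> distinct xs \<and> set xs \<subseteq> A}
      = (\<Union>T\<in>{T. T \<subseteq> A \<and> card T = k}. permutations_of_set T)"
    unfolding permutations_of_set_def by (auto simp: distinct_card)
  have finT: "finite {T. T \<subseteq> A \<and> card T = k}" by (rule finite_subset[of _ "Pow A"]) (use assms in auto)
  have "card (\<Union>T\<in>{T. T \<subseteq> A \<and> card T = k}. permutations_of_set T)
        = (\<Sum>T\<in>{T. T \<subseteq> A \<and> card T = k}. card (permutations_of_set T))"
    by (rule card_UN_disjoint[OF finT]) (simp_all add: finite_permutations_of_set perm_disj)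
  also have "\<dots> = (\<Sum>T\<in>{T. T \<subseteq> A \<and> card T = k}. fact k)"
  proof (rule sum.cong[OF refl])
    fix T assume "T \<in> {T. T \<subseteq> A \<and> card T = k}"
    then have "finite T" "card T = k" using finite_subset[OF _ assms] by auto
    then show "card (permutations_of_set T) = fact k" by (simp add: card_permutations_of_set)
  qed
  also have "\<dots> = (card A choose k) * fact k" using n_subsets[OF assms] by simp
  finally show ?thesis unfolding eq .
qed



lemma norm_prod_list_map: "cmod (prod_list (map x is)) = prod_list (map (\<lambda>i. cmod (x i)) is)"
  by (induction "is") (auto simp: norm_mult)

lemma prod_list_nonneg_map: "(\<And>i. y i \<ge> (0::real)) \<Longrightarrow> prod_list (map y is) \<ge> 0"
  by (induction "is") auto

lemma powr_root_pow:
  fixes a :: real assumes "a \<ge> 0" "k > 0"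
  shows "(a ^ k) powr (1 / real k) = a"
proof (cases "a = 0")
  case True then show ?thesis using assms by simp
next
  case False
  then have "a > 0" using assms by simp
  then have "a ^ k = a powr real k" by (simp add: powr_realpow)
  then show ?thesis using \<open>a > 0\<close> assms by (simp add: powr_powr)
qed

lemma P_bound:
  fixes y :: "nat \<Rightarrow> real" and E :: "nat \<Rightarrow> nat \<Rightarrow> bool"
  assumes t: "t \<ge> 2" and n: "n \<ge> 1" and y0: "\<And>i. y i \<ge> 0"
  defines "s \<equiv> (\<Sum>i<n. y i ^ t)"
  defines "c \<equiv> real (clique_count n E t)"
  shows "(\<Sum>S\<in>cliques n E t. \<Prod>i\<in>S. y i)
         \<le> c powr ((real t - 1) / real t) * real (n choose t) powr (1 / real t) * (s / real n)"
proof (cases "c = 0")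
  case True
  then have "cliques n E t = {}" unfolding c_def clique_count_def using finite_cliques by auto
  then show ?thesis using True by simp
next
  case False
  then have cp: "c > 0" unfolding c_def by simp
  define P where "P = (\<Sum>S\<in>cliques n E t. \<Prod>i\<in>S. y i)"
  have s0: "s \<ge> 0" unfolding s_def using y0 by (simp add: sum_nonneg)
  have P0: "P \<ge> 0" unfolding P_def using y0 by (simp add: sum_nonneg prod_nonneg)
  have "P ^ t \<le> c ^ (t - 1) * (\<Sum>S\<in>cliques n E t. (\<Prod>i\<in>S. y i) ^ t)"
    unfolding P_def c_def clique_count_def
    by (rule power_mean[OF finite_cliques]) (use t y0 in \<open>auto simp: prod_nonneg\<close>)
  also have "(\<Sum>S\<in>cliques n E t. (\<Prod>i\<in>S. y i) ^ t) = (\<Sum>S\<in>cliques n E t. \<Prod>i\<in>S. y i ^ t)"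
    by (simp add: prod_power_distrib)
  also have "\<dots> \<le> esym n t (\<lambda>i. y i ^ t)"
    unfolding esym_def
    by (rule sum_mono2) (auto simp: cliques_def y0 prod_nonneg intro: finite_subset[of _ "Pow {..<n}"])
  also have "\<dots> \<le> real (n choose t) * (s / real n) ^ t"
    unfolding s_def by (rule maclaurin) (simp add: y0)
  finally have Pt: "P ^ t \<le> c ^ (t - 1) * (real (n choose t) * (s / real n) ^ t)"
    using cp by (simp add: mult_left_mono)
  have tp: "t > 0" using t by simp
  have "P = (P ^ t) powr (1 / real t)" using powr_root_pow[OF P0 tp] by simp
  also have "\<dots> \<le> (c ^ (t - 1) * (real (n choose t) * (s / real n) ^ t)) powr (1 / real t)"
    by (rule powr_mono2) (use Pt P0 in auto)
  also have "\<dots> = (c ^ (t - 1)) powr (1 / real t) * real (n choose t) powr (1 / real t) * ((s / real n) ^ t) powr (1 / real t)"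
    using cp s0 by (simp add: powr_mult mult.assoc)
  also have "((s / real n) ^ t) powr (1 / real t) = s / real n"
    using powr_root_pow[OF _ tp, of "s / real n"] s0 by simp
  also have "(c ^ (t - 1)) powr (1 / real t) = c powr ((real t - 1) / real t)"
  proof -
    have "c ^ (t - 1) = c powr real (t - 1)" using cp by (simp add: powr_realpow)
    then show ?thesis using cp t by (simp add: powr_powr of_nat_diff)
  qed
  finally show ?thesis unfolding P_def .
qed



abbreviation bnd :: "nat \<Rightarrow> (nat \<Rightarrow> nat \<Rightarrow> bool) \<Rightarrow> nat \<Rightarrow> real" where
  "bnd n E t \<equiv> real t / real n * real (n choose t) powr (1 / real t)
               * real (clique_count n E t) powr ((real t - 1) / real t)"

lemma tensor_apply_lst: "tensor_apply m n A x i = (\<Sum>is\<in>lst (m - 1) n. A (i # is) * prod_list (map x is))"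
  unfolding tensor_apply_def lst_def ..

lemma eig_bound:
  assumes t: "t \<ge> 2" and n: "n \<ge> 1"
    and ev: "tensor_eigenvalue t n (clique_tensor n E t) lam"
  shows "cmod lam \<le> bnd n E t"
proof -
  obtain x where x0: "\<exists>i<n. x i \<noteq> 0"
    and eq: "\<forall>i<n. tensor_apply t n (clique_tensor n E t) x i = lam * x i ^ (t - 1)"
    using ev unfolding tensor_eigenvalue_def by blast
  define y where "y i = cmod (x i)" for i
  have y0: "\<And>i. y i \<ge> 0" unfolding y_def by simp
  have yfun: "(\<lambda>i. cmod (x i)) = y" by (rule ext) (simp add: y_def)
  define s where "s = (\<Sum>i<n. y i ^ t)"
  define P where "P = (\<Sum>S\<in>cliques n E t. \<Prod>i\<in>S. y i)"
  have a: "cmod lam * y i ^ (t - 1) \<le> (\<Sum>is\<in>lst (t - 1) n. ar n E t (i # is) * prod_list (map y is))"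
    if i: "i < n" for i
  proof -
    have "cmod lam * y i ^ (t - 1) = cmod (lam * x i ^ (t - 1))"
      unfolding y_def by (simp add: norm_mult norm_power)
    also have "\<dots> = cmod (\<Sum>is\<in>lst (t - 1) n. clique_tensor n E t (i # is) * prod_list (map x is))"
      using eq i by (simp add: tensor_apply_lst)
    also have "\<dots> \<le> (\<Sum>is\<in>lst (t - 1) n. cmod (clique_tensor n E t (i # is) * prod_list (map x is)))"
      by (rule norm_sum)
    also have "\<dots> = (\<Sum>is\<in>lst (t - 1) n. ar n E t (i # is) * prod_list (map y is))"
      by (rule sum.cong) (simp_all add: norm_mult clique_tensor_ar ar_nonneg norm_prod_list_map yfun)
    finally show ?thesis .
  qed
  have "cmod lam * s = (\<Sum>i<n. y i * (cmod lam * y i ^ (t - 1)))"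
    unfolding s_def sum_distrib_left
  proof (rule sum.cong[OF refl])
    fix i
    have "y i ^ t = y i * y i ^ (t - 1)" using t by (cases t) auto
    then show "cmod lam * y i ^ t = y i * (cmod lam * y i ^ (t - 1))" by simp
  qed
  also have "\<dots> \<le> (\<Sum>i<n. y i * (\<Sum>is\<in>lst (t - 1) n. ar n E t (i # is) * prod_list (map y is)))"
    by (rule sum_mono) (use a y0 in \<open>auto intro: mult_left_mono\<close>)
  also have "\<dots> = (\<Sum>i<n. \<Sum>is\<in>lst (t - 1) n. ar n E t (i # is) * prod_list (map y (i # is)))"
    by (simp add: sum_distrib_left mult_ac)
  also have "\<dots> = (\<Sum>L\<in>lst (Suc (t - 1)) n. ar n E t L * prod_list (map y L))"
    by (rule sum_cons)
  also have "Suc (t - 1) = t" using t by simp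
  also have "(\<Sum>L\<in>lst t n. ar n E t L * prod_list (map y L)) = real t * P"
    unfolding P_def by (rule clique_sum) (use t in simp)
  finally have main: "cmod lam * s \<le> real t * P" .
  have PB: "P \<le> real (clique_count n E t) powr ((real t - 1) / real t) * real (n choose t) powr (1 / real t) * (s / real n)"
    unfolding P_def s_def by (rule P_bound[OF t n y0])
  obtain i where i: "i < n" "x i \<noteq> 0" using x0 by blast
  have "0 < y i ^ t" using i unfolding y_def by simp
  also have "y i ^ t \<le> s" unfolding s_def
    by (rule member_le_sum) (use i y0 in auto)
  finally have sp: "s > 0" .
  have "cmod lam * s \<le> bnd n E t * s"
  proof -
    have "real t * P \<le> real t * (real (clique_count n E t) powr ((real t - 1) / real t) * real (n choose t) powr (1 / real t) * (s / real n))"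
      using PB by (rule mult_left_mono) simp
    also have "\<dots> = bnd n E t * s" by (simp add: field_simps)
    finally show ?thesis using main by linarith
  qed
  then show ?thesis using sp mult_le_cancel_right_pos by blast
qed



lemma ex_eig_ge3:
  assumes t: "t \<ge> 3" and n: "n \<ge> 1"
  shows "tensor_eigenvalue t n (clique_tensor n E t) 0"
proof -
  define x :: "nat \<Rightarrow> complex" where "x i = (if i = 0 then 1 else 0)" for i
  have x0: "\<exists>i<n. x i \<noteq> 0" using n unfolding x_def by (intro exI[of _ 0]) auto
  have "tensor_apply t n (clique_tensor n E t) x i = 0 * x i ^ (t - 1)" if i: "i < n" for i
  proof -
  have "tensor_apply t n (clique_tensor n E t) x i = 0"
    unfolding tensor_apply_lst
  proof (rule sum.neutral, rule ballI)
    fix "is" assume "is": "is \<in> lst (t - 1) n"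
    show "clique_tensor n E t (i # is) * prod_list (map x is) = 0"
    proof (cases "\<exists>j\<in>set is. j \<noteq> 0")
      case True
      then obtain j where "j \<in> set is" "j \<noteq> 0" by blast
      then have "0 \<in> set (map x is)" unfolding x_def by force
      then show ?thesis by (simp add: prod_list_zero_iff)
    next
      case False
      then have sub: "set is \<subseteq> {0}" by auto
      have "\<not> distinct is"
      proof
        assume "distinct is"
        then have "length is = card (set is)" by (simp add: distinct_card)
        also have "\<dots> \<le> 1" using card_mono[OF _ sub] by simp
        finally show False using "is" t unfolding lst_def by simp
      qed
      then show ?thesis unfolding clique_tensor_def by simp
    qed
  qed
  then show ?thesis by simp
  qed
  then show ?thesis unfolding tensor_eigenvalue_def using x0 by blast
qed

lemma lst_one: "lst (Suc 0) n = (\<lambda>j. [j]) ` {..<n}"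
  unfolding lst_def by (auto simp: length_Suc_conv image_def)

lemma ex_eig_2:
  assumes n: "n \<ge> 1"
  shows "\<exists>lam. tensor_eigenvalue 2 n (clique_tensor n E 2) lam"
proof -
  define M :: "complex mat" where "M = mat n n (\<lambda>(i, j). clique_tensor n E 2 [i, j])"
  have M: "M \<in> carrier_mat n n" unfolding M_def by simp
  have "degree (char_poly M) = n" using degree_monic_char_poly[OF M] by simp
  then have "\<not> constant (poly (char_poly M))" using n by (simp add: constant_degree)
  from fundamental_theorem_of_algebra[OF this] obtain k where "poly (char_poly M) k = 0" by blast
  then have "eigenvalue M k" using eigenvalue_root_char_poly[OF M] by simp
  then obtain v where v: "v \<in> carrier_vec n" "v \<noteq> 0\<^sub>v n" "M *\<^sub>v v = k \<cdot>\<^sub>v v"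
    unfolding eigenvalue_def eigenvector_def using M by auto
  define x where "x i = v $ i" for i
  have "\<exists>i<n. x i \<noteq> 0"
  proof (rule ccontr)
    assume "\<not> (\<exists>i<n. x i \<noteq> 0)"
    then have "v = 0\<^sub>v n" using v(1) unfolding x_def by (intro eq_vecI) auto
    then show False using v(2) by simp
  qed
  moreover have "\<forall>i<n. tensor_apply 2 n (clique_tensor n E 2) x i = k * x i ^ (2 - 1)"
  proof (intro allI impI)
    fix i assume i: "i < n"
    have "tensor_apply 2 n (clique_tensor n E 2) x i = (\<Sum>j<n. clique_tensor n E 2 [i, j] * x j)"
      unfolding tensor_apply_lst by (simp add: lst_one sum.reindex inj_on_def)
    also have "\<dots> = (\<Sum>j\<in>{0..<n}. M $$ (i, j) * v $ j)"
      unfolding lessThan_atLeast0 x_def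
    proof (rule sum.cong[OF refl])
      fix j assume "j \<in> {0..<n}"
      then show "clique_tensor n E 2 [i, j] * v $ j = M $$ (i, j) * v $ j"
        using i unfolding M_def by simp
    qed
    also have "\<dots> = row M i \<bullet> v"
      unfolding scalar_prod_def
    proof -
      have dv: "dim_vec v = n" using v(1) by simp
      show "(\<Sum>j\<in>{0..<n}. M $$ (i, j) * v $ j) = (\<Sum>j\<in>{0..<dim_vec v}. row M i $ j * v $ j)"
        unfolding dv by (rule sum.cong[OF refl]) (use M i in simp)
    qed
    also have "\<dots> = (M *\<^sub>v v) $ i" using M i by simp
    also have "\<dots> = k * x i" using v(3) i v(1) unfolding x_def by simp
    finally show "tensor_apply 2 n (clique_tensor n E 2) x i = k * x i ^ (2 - 1)" by simp
  qed
  ultimately show ?thesis unfolding tensor_eigenvalue_def by blast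
qed

lemma ex_eig:
  assumes t: "t \<ge> 2" and n: "n \<ge> 1"
  shows "\<exists>lam. tensor_eigenvalue t n (clique_tensor n E t) lam"
proof (cases "t = 2")
  case True then show ?thesis using ex_eig_2[OF n] by simp
next
  case False then show ?thesis using ex_eig_ge3[OF _ n, of t] t by auto
qed



lemma complete_eig:
  assumes t: "t \<ge> 2" and nt: "n \<ge> t" and comp: "\<forall>u<n. \<forall>v<n. u \<noteq> v \<longrightarrow> E u v"
  shows "tensor_eigenvalue t n (clique_tensor n E t) (of_nat ((n - 1) choose (t - 1)))"
proof -
  define x :: "nat \<Rightarrow> complex" where "x i = 1" for i
  have x0: "\<exists>i<n. x i \<noteq> 0" using nt t unfolding x_def by (intro exI[of _ 0]) auto
  have "tensor_apply t n (clique_tensor n E t) x i = of_nat ((n - 1) choose (t - 1)) * x i ^ (t - 1)"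
    if i: "i < n" for i
  proof -
    define c :: complex where "c = 1 / of_nat (fact (t - 1))"
    have ct: "clique_tensor n E t (i # is) = (if distinct (i # is) then c else 0)"
      if "is": "is \<in> lst (t - 1) n" for "is"
    proof (cases "distinct (i # is)")
      case True
      have len: "length (i # is) = t" using "is" t unfolding lst_def by auto
      have "set (i # is) \<in> cliques n E t"
        unfolding cliques_def is_clique_def
        using "is" i len True distinct_card[OF True] comp unfolding lst_def by auto
      then show ?thesis using True len unfolding clique_tensor_def c_def by simp
    next
      case False then show ?thesis unfolding clique_tensor_def by auto
    qed
    have pl1: "prod_list (map x is) = 1" for "is" unfolding x_def by (induction "is") auto
    have "tensor_apply t n (clique_tensor n E t) x i = (\<Sum>is\<in>lst (t - 1) n. if distinct (i # is) then c else 0)"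
      unfolding tensor_apply_lst by (rule sum.cong) (simp_all add: ct pl1 del: distinct.simps)
    also have "\<dots> = (\<Sum>is\<in>{is\<in>lst (t - 1) n. distinct (i # is)}. c)"
      by (rule sum.inter_filter[OF finite_lst, symmetric])
    also have "{is\<in>lst (t - 1) n. distinct (i # is)} = {xs. length xs = t - 1 \<and> distinct xs \<and> set xs \<subseteq> {..<n} - {i}}"
      unfolding lst_def by auto
    finally have ta: "tensor_apply t n (clique_tensor n E t) x i = (\<Sum>is\<in>{xs. length xs = t - 1 \<and> distinct xs \<and> set xs \<subseteq> {..<n} - {i}}. c)" .
    have "card {xs. length xs = t - 1 \<and> distinct xs \<and> set xs \<subseteq> {..<n} - {i}} = ((n - 1) choose (t - 1)) * fact (t - 1)"
      using distinct_lists_card[of "{..<n} - {i}" "t - 1"] i by simp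
    then have "tensor_apply t n (clique_tensor n E t) x i = of_nat (((n - 1) choose (t - 1)) * fact (t - 1)) * c"
      unfolding ta by simp
    also have "\<dots> = of_nat ((n - 1) choose (t - 1))" unfolding c_def by simp
    finally show ?thesis unfolding x_def by simp
  qed
  then show ?thesis unfolding tensor_eigenvalue_def using x0 by blast
qed

theorem lemma6:
  fixes n t :: nat and E :: "nat \<Rightarrow> nat \<Rightarrow> bool"
  assumes "t \<ge> 2" and "n \<ge> 1"
    and "\<forall>u v. E u v \<longrightarrow> E v u" and "\<forall>v. \<not> E v v"
  shows "clique_spectral_radius n E t
           \<le> real t / real n * real (n choose t) powr (1 / real t)
               * real (clique_count n E t) powr ((real t - 1) / real t)
         \<and> (((\<forall>u<n. \<forall>v<n. u \<noteq> v \<longrightarrow> E u v) \<or> cliques n E t = {}) \<longrightarrow>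
           clique_spectral_radius n E t
           = real t / real n * real (n choose t) powr (1 / real t)
               * real (clique_count n E t) powr ((real t - 1) / real t))"
proof -
  note t = assms(1) and n = assms(2)
  define Sp where "Sp = {cmod lam | lam. tensor_eigenvalue t n (clique_tensor n E t) lam}"
  have mu: "clique_spectral_radius n E t = Sup Sp"
    unfolding clique_spectral_radius_def tensor_spectral_radius_def Sp_def ..
  obtain lam0 where lam0: "tensor_eigenvalue t n (clique_tensor n E t) lam0" using ex_eig[OF t n] by blast
  have ne: "Sp \<noteq> {}" unfolding Sp_def using lam0 by blast
  have ub: "\<And>a. a \<in> Sp \<Longrightarrow> a \<le> bnd n E t" unfolding Sp_def using eig_bound[OF t n] by blast
  have bdd: "bdd_above Sp" using ub by (rule bdd_aboveI)
  have part1: "Sup Sp \<le> bnd n E t" by (rule cSup_least[OF ne ub])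
  have lower: "a \<le> Sup Sp" if "a \<in> Sp" for a by (rule cSup_upper[OF that bdd])
  have empty_case: "Sup Sp = bnd n E t" if e: "cliques n E t = {}"
  proof -
    have "clique_count n E t = 0" using e unfolding clique_count_def by simp
    then have "bnd n E t = 0" by simp
    moreover have "cmod lam0 \<in> Sp" unfolding Sp_def using lam0 by blast
    then have "cmod lam0 \<le> Sup Sp" by (rule lower)
    then have "0 \<le> Sup Sp" using norm_ge_zero[of lam0] by linarith
    ultimately show ?thesis using part1 by linarith
  qed
  have part2: "Sup Sp = bnd n E t"
    if h: "(\<forall>u<n. \<forall>v<n. u \<noteq> v \<longrightarrow> E u v) \<or> cliques n E t = {}"
  proof (cases "cliques n E t = {}")
    case True then show ?thesis by (rule empty_case)
  next
    case False
    then have comp: "\<forall>u<n. \<forall>v<n. u \<noteq> v \<longrightarrow> E u v" using h by blast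
    have nt: "n \<ge> t"
    proof -
      obtain S where "S \<in> cliques n E t" using False by blast
      then have "S \<subseteq> {..<n}" "card S = t" unfolding cliques_def by auto
      then show ?thesis using card_mono[of "{..<n}" S] by simp
    qed
    have cl: "cliques n E t = {S. S \<subseteq> {..<n} \<and> card S = t}"
      unfolding cliques_def is_clique_def using comp by blast
    have cc: "clique_count n E t = n choose t"
      unfolding clique_count_def cl using n_subsets[of "{..<n}" t] by simp
    have Cp: "real (n choose t) > 0" using nt by simp
    have "bnd n E t = real t / real n * real (n choose t) powr (1 / real t + (real t - 1) / real t)"
      unfolding cc by (simp add: powr_add)
    also have "1 / real t + (real t - 1) / real t = 1" using t by (simp add: field_simps)
    also have "real t / real n * real (n choose t) powr 1 = real ((n - 1) choose (t - 1))"
    proof -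
      have "t * (n choose t) = n * ((n - 1) choose (t - 1))" using t by (simp add: times_binomial_minus1_eq)
      then have "real t * real (n choose t) = real n * real ((n - 1) choose (t - 1))" by (metis of_nat_mult)
      then show ?thesis using n Cp by (simp add: field_simps)
    qed
    finally have b: "bnd n E t = real ((n - 1) choose (t - 1))" .
    have "real ((n - 1) choose (t - 1)) \<in> Sp"
      unfolding Sp_def using complete_eig[OF t nt comp] by force
    then have "real ((n - 1) choose (t - 1)) \<le> Sup Sp" by (rule lower)
    then show ?thesis using part1 b by simp
  qed
  show ?thesis unfolding mu using part1 part2 by blast
qed

end
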